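(* Let $A\subset\mathbb{R}^d$ be a convex polytope with nonempty interior and $G$ a subfacet of $A$; let $F_1,F_2$ be the two facets of $A$ meeting at $G$ and $H_1^-,H_2^-$ the support halfspaces of $A$ at $F_1,F_2$. For $\delta>0$ let $Q_\delta=(G+S_\delta)\cap H_1^-\cap H_2^-$, where $S_\delta$ is the closed $2$-dimensional ball of radius $\delta$ centered at the origin lying in the orthogonal complement of the linear subspace parallel to $\operatorname{aff}(G)$. Let $\mu$ be a positive finite Borel measure supported on $G-G$ such that $\mathbf{1}_G\ast\mu\ge1$ almost everywhere on $G$ with respect to $(d-2)$-dimensional volume measure. Then for every $\eta>0$, $m\{x\in Q_\delta:(\mathbf{1}_A\ast\mu)(x)<1-\eta\}=o(m(Q_\delta))$ as $\delta\to0$.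
   Context: A facet is a $(d-1)$-dimensional face, a subfacet a $(d-2)$-dimensional face; each subfacet lies in exactly two facets. $\operatorname{aff}(G)$ is the affine hull, $m$ Lebesgue measure, $G-G=\{a-b:a,b\in G\}$, and $(\mathbf{1}_G\ast\mu)(x)=\mu(\{t:x-t\in G\})$. *)

theory Defs
  imports "HOL-Analysis.Analysis" "HOL-Library.Landau_Symbols"
begin

definition subfacet_of :: "'a::euclidean_space set \<Rightarrow> 'a set \<Rightarrow> bool"
  where "subfacet_of G S \<longleftrightarrow> G face_of S \<and> G \<noteq> {} \<and> aff_dim G = aff_dim S - 2"

definition support_halfspace_at :: "'a::euclidean_space set \<Rightarrow> 'a set \<Rightarrow> 'a set \<Rightarrow> bool"
  where "support_halfspace_at S F H \<longleftrightarrow>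
     (\<exists>a b. a \<noteq> 0 \<and> H = {x. a \<bullet> x \<le> b} \<and> S \<subseteq> H \<and> F \<subseteq> {x. a \<bullet> x = b})"

definition diff_set :: "'a::ab_group_add set \<Rightarrow> 'a set"
  where "diff_set G = {a - b | a b. a \<in> G \<and> b \<in> G}"

definition msum :: "'a::ab_group_add set \<Rightarrow> 'a set \<Rightarrow> 'a set"
  where "msum X Y = {x + y | x y. x \<in> X \<and> y \<in> Y}"

definition orth_disc :: "'a::euclidean_space set \<Rightarrow> real \<Rightarrow> 'a set"
  where "orth_disc G r = {v. norm v \<le> r \<and> (\<forall>u \<in> span (diff_set G). orthogonal v u)}"

text \<open>(1_G * mu)(x) = mu {t. x - t \<in> G}.\<close>
definition conv_ind :: "'a::euclidean_space set \<Rightarrow> 'a measure \<Rightarrow> 'a \<Rightarrow> real"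
  where "conv_ind G \<mu> x = measure \<mu> {t. x - t \<in> G}"

text \<open>A subset N of a (d-2)-dimensional flat aff(G) is null for the (d-2)-dimensional
  volume measure on aff(G) iff its cylinder N + (unit disc orthogonal to the flat)
  is Lebesgue-null in R^d (Fubini: the d-dimensional measure of the cylinder is pi times
  the (d-2)-dimensional measure of N).\<close>
definition flat_null :: "'a::euclidean_space set \<Rightarrow> 'a set \<Rightarrow> bool"
  where "flat_null G N \<longleftrightarrow> N \<subseteq> affine hull G \<and> msum N (orth_disc G 1) \<in> null_sets lebesgue"

end

theory Submission
  imports Defs
begin


lemma emeasure_lborel_shift:
  fixes c :: "'a::euclidean_space"
  assumes "S \<in> sets borel"
  shows "emeasure lborel {x. c + x \<in> S} = emeasure lborel S"
proof -
  have "emeasure (distr lborel borel ((+) c)) S = emeasure lborel ((+) c -` S \<inter> space lborel)"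
    using assms by (intro emeasure_distr) auto
  then show ?thesis by (simp add: lborel_distr_plus vimage_def)
qed

lemma nn_integral_lborel_shift:
  fixes c :: "'a::euclidean_space"
  assumes "f \<in> borel_measurable borel"
  shows "(\<integral>\<^sup>+x. f (c + x) \<partial>lborel) = (\<integral>\<^sup>+x. f x \<partial>lborel)"
proof -
  have "(\<integral>\<^sup>+x. f x \<partial>distr lborel borel ((+) c)) = (\<integral>\<^sup>+x. f (c + x) \<partial>lborel)"
    using assms by (intro nn_integral_distr) auto
  then show ?thesis by (simp add: lborel_distr_plus)
qed

lemma linear_emeasure_scale:
  fixes L :: "'a::euclidean_space \<Rightarrow> 'a"
  assumes "linear L" "inj L"
  obtains k where "\<And>S. S \<in> sets borel \<Longrightarrow> emeasure lborel (L ` S) = k * emeasure lborel S"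
proof -
  obtain h where hl: "linear h" and hL: "\<And>x. h (L x) = x" and Lh: "\<And>x. L (h x) = x"
    using assms linear_injective_isomorphism by metis
  have hm[measurable]: "h \<in> borel_measurable borel"
    using hl by (simp add: borel_measurable_continuous_onI linear_continuous_on linear_linear)
  have img: "L ` S = h -` S" for S
    using hL Lh by (auto simp: image_def) (metis)
  define f where "f S = emeasure lborel (h -` S)" for S
  define Bl :: "'a set" where "Bl = ball 0 1"
  have Blb[measurable]: "Bl \<in> sets borel" by (simp add: Bl_def)
  have i: "emeasure lborel {z. x + h z \<in> B} = f B" if "B \<in> sets borel" for x B
  proof -
    have "{z. x + h z \<in> B} = {z. L x + z \<in> h -` B}"
      using hl hL by (auto simp: linear_add)
    moreover have "h -` B \<in> sets borel" using measurable_sets[OF hm that] by simp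
    ultimately show ?thesis unfolding f_def using emeasure_lborel_shift by metis
  qed
  have ii: "emeasure lborel {z. u - h z \<in> Bl} = f Bl" for u
  proof -
    have "{z. u - h z \<in> Bl} = {z. (- L u) + z \<in> h -` Bl}"
      using hl hL by (auto simp: Bl_def linear_add linear_diff dist_norm norm_minus_commute)
    moreover have "h -` Bl \<in> sets borel" using measurable_sets[OF hm Blb] by simp
    ultimately show ?thesis unfolding f_def using emeasure_lborel_shift by metis
  qed
  have fin: "emeasure lborel Bl < \<infinity>" unfolding Bl_def using emeasure_lborel_ball_finite[of "0::'a" 1] by (simp add: top.not_eq_extremum)
  have pos: "emeasure lborel Bl \<noteq> 0"
    unfolding Bl_def by (metis content_ball_eq_0_iff ennreal_eq_zero_iff measure_eq_emeasure_eq_ennreal not_one_le_zero order_refl)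
  have key: "emeasure lborel Bl * f B = emeasure lborel B * f Bl" if B[measurable]: "B \<in> sets borel" for B
  proof -
    have "emeasure lborel Bl * f B = (\<integral>\<^sup>+x. f B * indicator Bl x \<partial>lborel)"
      by (simp add: nn_integral_cmult_indicator mult.commute)
    also have "\<dots> = (\<integral>\<^sup>+x. indicator Bl x * f B \<partial>lborel)"
      by (simp add: mult.commute)
    also have "\<dots> = (\<integral>\<^sup>+x. indicator Bl x * (\<integral>\<^sup>+z. indicator B (x + h z) \<partial>lborel) \<partial>lborel)"
    proof (intro nn_integral_cong arg_cong2[where f="(*)"] refl)
      fix x
      have "(\<integral>\<^sup>+z. indicator B (x + h z) \<partial>lborel) = (\<integral>\<^sup>+z. indicator {z. x + h z \<in> B} z \<partial>lborel)"
        by (intro nn_integral_cong) (auto simp: indicator_def)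
      also have "\<dots> = emeasure lborel {z. x + h z \<in> B}"
        by (intro nn_integral_indicator) measurable
      finally show "f B = (\<integral>\<^sup>+z. indicator B (x + h z) \<partial>lborel)" using i[OF B] by simp
    qed
    also have "\<dots> = (\<integral>\<^sup>+x. \<integral>\<^sup>+z. indicator Bl x * indicator B (x + h z) \<partial>lborel \<partial>lborel)"
      by (intro nn_integral_cong) (simp add: nn_integral_cmult)
    also have "\<dots> = (\<integral>\<^sup>+z. \<integral>\<^sup>+x. indicator Bl x * indicator B (x + h z) \<partial>lborel \<partial>lborel)"
      by (rule lborel_pair.Fubini'[of "\<lambda>x z. indicator Bl x * indicator B (x + h z)", symmetric]) measurable
    also have "\<dots> = (\<integral>\<^sup>+z. \<integral>\<^sup>+u. indicator Bl (u - h z) * indicator B u \<partial>lborel \<partial>lborel)"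
    proof (rule nn_integral_cong)
      fix z
      show "(\<integral>\<^sup>+x. indicator Bl x * indicator B (x + h z) \<partial>lborel) = (\<integral>\<^sup>+u. indicator Bl (u - h z) * indicator B u \<partial>lborel)"
        using nn_integral_lborel_shift[of "\<lambda>u. indicator Bl (u - h z) * indicator B u" "h z"]
        by (simp add: add.commute)
    qed
    also have "\<dots> = (\<integral>\<^sup>+u. \<integral>\<^sup>+z. indicator Bl (u - h z) * indicator B u \<partial>lborel \<partial>lborel)"
      by (rule lborel_pair.Fubini'[of "\<lambda>u z. indicator Bl (u - h z) * indicator B u"]) measurable
    also have "\<dots> = (\<integral>\<^sup>+u. indicator B u * f Bl \<partial>lborel)"
    proof (rule nn_integral_cong)
      fix u
      have "(\<integral>\<^sup>+z. indicator Bl (u - h z) * indicator B u \<partial>lborel) = (\<integral>\<^sup>+z. indicator {z. u - h z \<in> Bl} z \<partial>lborel) * indicator B u"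
        by (subst nn_integral_multc[symmetric]) (auto intro!: nn_integral_cong simp: indicator_def)
      also have "\<dots> = f Bl * indicator B u"
      proof -
        have "{z. u - h z \<in> Bl} \<in> sets lborel" by measurable
        then show ?thesis using ii[of u] by (subst nn_integral_indicator) simp_all
      qed
      finally show "(\<integral>\<^sup>+z. indicator Bl (u - h z) * indicator B u \<partial>lborel) = indicator B u * f Bl"
        by (simp add: mult.commute)
    qed
    also have "\<dots> = emeasure lborel B * f Bl"
      by (simp add: nn_integral_multc)
    finally show ?thesis .
  qed
  show ?thesis
  proof (rule that)
    fix S :: "'a set" assume S: "S \<in> sets borel"
    have "emeasure lborel (L ` S) = f S" by (simp add: img f_def)
    also have "\<dots> = (f S * emeasure lborel Bl) / emeasure lborel Bl"
      using fin pos by (simp add: ennreal_mult_divide_eq)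
    also have "\<dots> = (emeasure lborel Bl * f S) / emeasure lborel Bl"
      by (simp add: mult.commute)
    also have "\<dots> = (f Bl / emeasure lborel Bl) * emeasure lborel S"
      using key[OF S] by (simp add: ennreal_times_divide mult.commute)
    finally show "emeasure lborel (L ` S) = (f Bl / emeasure lborel Bl) * emeasure lborel S" .
  qed
qed



lemma proj_exists:
  fixes V :: "'a::euclidean_space set"
  assumes "subspace V"
  obtains P where "linear P" "\<And>x. P x \<in> V" "\<And>x u. u \<in> V \<Longrightarrow> (x - P x) \<bullet> u = 0"
    "\<And>v. v \<in> V \<Longrightarrow> P v = v" "\<And>v. (\<forall>u\<in>V. v \<bullet> u = 0) \<Longrightarrow> P v = 0"
proof -
  obtain B where B: "B \<subseteq> V" "pairwise orthogonal B" "\<And>x. x \<in> B \<Longrightarrow> norm x = 1"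
    "independent B" "span B = V"
    using orthonormal_basis_subspace[OF assms] by metis
  have fB: "finite B" using B(4) independent_imp_finite by blast
  define P where "P x = (\<Sum>b\<in>B. (x \<bullet> b) *\<^sub>R b)" for x
  have lin: "linear P" unfolding P_def
    by (intro linear_compose_sum ballI linearI) (simp_all add: inner_add_left scaleR_add_left)
  have PV: "P x \<in> V" for x
  proof -
    have "P x \<in> span B" unfolding P_def by (intro span_sum span_mul span_base)
    then show ?thesis using B(5) by simp
  qed
  have bb: "b \<bullet> b = 1" if "b \<in> B" for b
    using B(3)[OF that] by (simp add: dot_square_norm)
  have ob: "(x - P x) \<bullet> c = 0" if "c \<in> B" for x c
  proof -
    have "P x \<bullet> c = (\<Sum>b\<in>B. (x \<bullet> b) * (b \<bullet> c))"
      unfolding P_def by (simp add: inner_sum_left)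
    also have "\<dots> = (\<Sum>b\<in>B. if b = c then x \<bullet> c else 0)"
      using B(2) that bb by (intro sum.cong refl) (auto simp: pairwise_def orthogonal_def)
    also have "\<dots> = x \<bullet> c" using fB that by simp
    finally show ?thesis by (simp add: inner_diff_left)
  qed
  have orth: "(x - P x) \<bullet> u = 0" if "u \<in> V" for x u
  proof -
    have "orthogonal (x - P x) u"
      by (rule orthogonal_to_span[of u B]) (use that B(5) ob in \<open>auto simp: orthogonal_def\<close>)
    then show ?thesis by (simp add: orthogonal_def)
  qed
  have id: "P v = v" if "v \<in> V" for v
  proof -
    have "v - P v \<in> V" using that PV assms by (simp add: subspace_diff)
    then have "(v - P v) \<bullet> (v - P v) = 0" using orth by blast
    then show ?thesis by simp
  qed
  have z: "P v = 0" if "\<forall>u\<in>V. v \<bullet> u = 0" for v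
  proof -
    have "P v \<bullet> P v = v \<bullet> P v - (v - P v) \<bullet> P v" by (simp add: inner_diff_left)
    also have "\<dots> = 0" using that PV orth by simp
    finally show ?thesis by simp
  qed
  show ?thesis using that lin PV orth id z by blast
qed



lemma facet_eq:
  fixes A F :: "'a::euclidean_space set"
  assumes "convex A" "interior A \<noteq> {}" "F facet_of A" "a \<noteq> 0"
    "A \<subseteq> {x. a \<bullet> x \<le> b}" "F \<subseteq> {x. a \<bullet> x = b}"
  shows "F = A \<inter> {x. a \<bullet> x = b}"
proof (rule ccontr)
  assume ne: "F \<noteq> A \<inter> {x. a \<bullet> x = b}"
  define E where "E = A \<inter> {x. a \<bullet> x = b}"
  have Ef: "E face_of A" unfolding E_def
    using assms(1,5) by (intro face_of_Int_supporting_hyperplane_le) auto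
  have FA: "F face_of A" "aff_dim F = aff_dim A - 1" using assms(3) by (auto simp: facet_of_def)
  have FE: "F \<subseteq> E" unfolding E_def using assms(6) FA(1) face_of_imp_subset by blast
  have "E \<noteq> A"
  proof
    assume "E = A"
    then have "A \<subseteq> {x. a \<bullet> x = b}" unfolding E_def by blast
    then have "interior A \<subseteq> interior {x. a \<bullet> x = b}" by (rule interior_mono)
    then show False using assms(2,4) by simp
  qed
  then have l1: "aff_dim E < aff_dim A" using face_of_aff_dim_lt[OF assms(1) Ef] by blast
  have "F face_of E" using face_of_subset[OF FA(1) FE] Ef face_of_imp_subset by blast
  moreover have "convex E" using Ef face_of_imp_convex by blast
  ultimately have "aff_dim F < aff_dim E" using face_of_aff_dim_lt ne unfolding E_def by blast
  then show False using l1 FA(2) by linarith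
qed

lemma aff_hull_V:
  fixes G :: "'a::euclidean_space set"
  assumes "g \<in> G" "v \<in> span (diff_set G)"
  shows "g + v \<in> affine hull G"
proof -
  define S where "S = (\<lambda>x. (-g)+x) ` (affine hull G)"
  have sS: "subspace S" unfolding S_def
    using assms(1) by (intro affine_diffs_subspace) (auto simp: hull_inc)
  have "diff_set G \<subseteq> S"
  proof
    fix z assume "z \<in> diff_set G"
    then obtain x y where z: "z = x - y" "x \<in> G" "y \<in> G" unfolding diff_set_def by blast
    have "-g + x \<in> S" "-g + y \<in> S" unfolding S_def using z by (auto simp: hull_inc)
    then have "(-g + x) - (-g + y) \<in> S" using sS subspace_diff by blast
    then show "z \<in> S" using z by simp
  qed
  then have "span (diff_set G) \<subseteq> S" using sS span_minimal by blast
  then have "v \<in> S" using assms(2) by blast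
  then show ?thesis unfolding S_def by auto
qed

lemma a_orth:
  fixes G :: "'a::euclidean_space set"
  assumes "\<And>x. x \<in> G \<Longrightarrow> a \<bullet> x = b" "u \<in> span (diff_set G)"
  shows "a \<bullet> u = 0"
proof -
  have "orthogonal a u"
  proof (rule orthogonal_to_span[OF assms(2)])
    fix y assume "y \<in> diff_set G"
    then obtain x z where "y = x - z" "x \<in> G" "z \<in> G" unfolding diff_set_def by blast
    then show "orthogonal a y" using assms(1) by (simp add: orthogonal_def inner_diff_right)
  qed
  then show ?thesis by (simp add: orthogonal_def)
qed

lemma dim_diff_set:
  fixes G :: "'a::euclidean_space set"
  assumes "g \<in> G"
  shows "aff_dim G = int (dim (span (diff_set G)))"
proof -
  have "aff_dim G = int (dim ((\<lambda>x. x - g) ` G))"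
    using assms by (intro aff_dim_eq_dim_subtract) (simp add: hull_inc)
  moreover have "span ((\<lambda>x. x - g) ` G) = span (diff_set G)"
  proof (rule span_eq[THEN iffD2], rule conjI)
    show "(\<lambda>x. x - g) ` G \<subseteq> span (diff_set G)"
      using assms by (auto simp: diff_set_def intro!: span_base)
    show "diff_set G \<subseteq> span ((\<lambda>x. x - g) ` G)"
    proof
      fix z assume "z \<in> diff_set G"
      then obtain x y where z: "z = x - y" "x \<in> G" "y \<in> G" unfolding diff_set_def by blast
      have "(x - g) - (y - g) \<in> span ((\<lambda>x. x - g) ` G)"
        using z by (intro span_diff span_base) auto
      then show "z \<in> span ((\<lambda>x. x - g) ` G)" using z by simp
    qed
  qed
  ultimately show ?thesis by (metis dim_span)
qed

lemma dim_perp: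
  fixes V :: "'a::euclidean_space set"
  assumes "subspace V"
  shows "dim {v. \<forall>u\<in>V. v \<bullet> u = 0} + dim V = DIM('a)"
proof -
  define U where "U = {v. \<forall>u\<in>V. v \<bullet> u = 0}"
  have sU: "subspace U" unfolding U_def subspace_def
    by (auto simp: inner_add_left)
  obtain P where P: "linear P" "\<And>x. P x \<in> V" "\<And>x u. u \<in> V \<Longrightarrow> (x - P x) \<bullet> u = 0"
    using proj_exists[OF assms] by metis
  have "{x + y |x y. x \<in> V \<and> y \<in> U} = UNIV"
  proof (intro set_eqI iffI)
    fix z :: 'a
    have "z = P z + (z - P z)" by simp
    moreover have "z - P z \<in> U" unfolding U_def using P(3) by blast
    ultimately show "z \<in> {x + y |x y. x \<in> V \<and> y \<in> U}" using P(2) by blast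
  qed auto
  moreover have "V \<inter> U = {0}"
    unfolding U_def using assms subspace_0 by (auto dest: inner_eq_zero_iff[THEN iffD1])
  ultimately have "dim (UNIV::'a set) + dim ({0::'a}) = dim V + dim U"
    using dim_sums_Int[OF assms sU] by simp
  then show ?thesis unfolding U_def by simp
qed



lemma edge_vec:
  fixes A G F1 F2 :: "'a::euclidean_space set"
  assumes cA: "convex A" and intA: "interior A \<noteq> {}" and sub: "subfacet_of G A"
    and f1: "F1 facet_of A" and f2: "F2 facet_of A" and ne: "F1 \<noteq> F2" and G1: "G \<subseteq> F1" and G2: "G \<subseteq> F2"
    and a1: "a1 \<noteq> 0" "A \<subseteq> {x. a1 \<bullet> x \<le> b1}" "F1 \<subseteq> {x. a1 \<bullet> x = b1}"
    and a2: "a2 \<noteq> 0" "A \<subseteq> {x. a2 \<bullet> x \<le> b2}" "F2 \<subseteq> {x. a2 \<bullet> x = b2}"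
    and g: "g \<in> G"
  obtains p v e where "p \<in> A" "v \<in> span (diff_set G)" "\<forall>u\<in>span (diff_set G). e \<bullet> u = 0"
    "p = g + v + e" "a1 \<bullet> e = 0" "a2 \<bullet> e < 0"
proof -
  define V where "V = span (diff_set G)"
  have sV: "subspace V" unfolding V_def by simp
  obtain P where P: "linear P" "\<And>x. P x \<in> V" "\<And>x u. u \<in> V \<Longrightarrow> (x - P x) \<bullet> u = 0"
    using proj_exists[OF sV] by metis
  have affG: "aff_dim G = aff_dim A - 2" using sub by (simp add: subfacet_of_def)
  have F1A: "F1 face_of A" "aff_dim F1 = aff_dim A - 1" using f1 by (auto simp: facet_of_def)
  have F2A: "F2 face_of A" "aff_dim F2 = aff_dim A - 1" using f2 by (auto simp: facet_of_def)
  have F1eq: "F1 = A \<inter> {x. a1 \<bullet> x = b1}" by (rule facet_eq[OF cA intA f1 a1])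
  have F2eq: "F2 = A \<inter> {x. a2 \<bullet> x = b2}" by (rule facet_eq[OF cA intA f2 a2])
  have "\<not> F1 \<subseteq> affine hull G"
  proof
    assume "F1 \<subseteq> affine hull G"
    then have "aff_dim F1 \<le> aff_dim (affine hull G)" by (rule aff_dim_subset)
    then show False using affG F1A(2) by simp
  qed
  then obtain p where p: "p \<in> F1" "p \<notin> affine hull G" by blast
  have pA: "p \<in> A" using p F1A(1) face_of_imp_subset by blast
  define v where "v = P (p - g)"
  define e where "e = (p - g) - v"
  have vV: "v \<in> V" unfolding v_def using P by blast
  have eV: "\<forall>u\<in>V. e \<bullet> u = 0" unfolding e_def v_def using P(3) by blast
  have pe: "p = g + v + e" unfolding e_def by simp
  have a1G: "\<And>x. x \<in> G \<Longrightarrow> a1 \<bullet> x = b1" using G1 a1(3) by blast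
  have a2G: "\<And>x. x \<in> G \<Longrightarrow> a2 \<bullet> x = b2" using G2 a2(3) by blast
  have a1v: "a1 \<bullet> v = 0" using a_orth[OF a1G] vV V_def by blast
  have a2v: "a2 \<bullet> v = 0" using a_orth[OF a2G] vV V_def by blast
  have a1p: "a1 \<bullet> p = b1" using p a1(3) by blast
  have e1: "a1 \<bullet> e = 0" unfolding e_def using a1p a1G[OF g] a1v by (simp add: inner_diff_right)
  have a2p: "a2 \<bullet> p \<le> b2" using pA a2(2) by blast
  have e2le: "a2 \<bullet> e \<le> 0" unfolding e_def using a2p a2G[OF g] a2v by (simp add: inner_diff_right)
  have e2: "a2 \<bullet> e < 0"
  proof (rule ccontr)
    assume "\<not> a2 \<bullet> e < 0"
    then have "a2 \<bullet> e = 0" using e2le by simp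
    then have "a2 \<bullet> p = b2" using pe a2G[OF g] a2v by (simp add: inner_add_right)
    then have pF2: "p \<in> F2" using F2eq pA by blast
    have sub2: "insert p G \<subseteq> F1 \<inter> F2" using pF2 p G1 G2 by blast
    have I: "(F1 \<inter> F2) face_of A" using face_of_Int F1A(1) F2A(1) by blast
    have IF1: "(F1 \<inter> F2) face_of F1" using face_of_subset[OF I] F1A(1) face_of_imp_subset by blast
    have "F1 \<inter> F2 \<noteq> F1"
    proof
      assume "F1 \<inter> F2 = F1"
      then have "F1 \<subseteq> F2" by blast
      then have "F1 face_of F2" using face_of_subset[OF F1A(1)] F2A(1) face_of_imp_subset by blast
      then have "aff_dim F1 < aff_dim F2" using face_of_aff_dim_lt ne F2A(1) face_of_imp_convex by blast
      then show False using F1A(2) F2A(2) by simp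
    qed
    then have "aff_dim (F1 \<inter> F2) < aff_dim F1"
      using face_of_aff_dim_lt[OF _ IF1] F1A(1) face_of_imp_convex by blast
    moreover have "aff_dim (insert p G) = aff_dim G + 1" using p(2) by (simp add: aff_dim_insert)
    moreover have "aff_dim (insert p G) \<le> aff_dim (F1 \<inter> F2)" using sub2 by (rule aff_dim_subset)
    ultimately show False using affG F1A(2) by simp
  qed
  show ?thesis using that[OF pA _ _ pe e1 e2] vV eV V_def by blast
qed



lemma geom_key:
  fixes A G F1 F2 :: "'a::euclidean_space set"
  assumes cA: "convex A" and intA: "interior A \<noteq> {}" and sub: "subfacet_of G A"
    and f1: "F1 facet_of A" and f2: "F2 facet_of A" and ne: "F1 \<noteq> F2" and G1: "G \<subseteq> F1" and G2: "G \<subseteq> F2"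
    and a1: "a1 \<noteq> 0" "A \<subseteq> {x. a1 \<bullet> x \<le> b1}" "F1 \<subseteq> {x. a1 \<bullet> x = b1}"
    and a2: "a2 \<noteq> 0" "A \<subseteq> {x. a2 \<bullet> x \<le> b2}" "F2 \<subseteq> {x. a2 \<bullet> x = b2}"
    and g: "g \<in> rel_interior G"
    and w: "\<forall>u\<in>span (diff_set G). w \<bullet> u = 0" "a1 \<bullet> w \<le> 0" "a2 \<bullet> w \<le> 0"
  shows "\<exists>\<delta>>0. g + \<delta> *\<^sub>R w \<in> A"
proof -
  define V where "V = span (diff_set G)"
  have sV: "subspace V" unfolding V_def by simp
  have gG: "g \<in> G" using g rel_interior_subset by blast
  have GA: "G \<subseteq> A" using sub by (auto simp: subfacet_of_def dest: face_of_imp_subset)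
  obtain p1 v1 e1 where pe1: "p1 \<in> A" "v1 \<in> V" "\<forall>u\<in>V. e1 \<bullet> u = 0" "p1 = g + v1 + e1"
    "a1 \<bullet> e1 = 0" "a2 \<bullet> e1 < 0"
    using edge_vec[OF cA intA sub f1 f2 ne G1 G2 a1 a2 gG] unfolding V_def by metis
  obtain p2 v2 e2 where pe2: "p2 \<in> A" "v2 \<in> V" "\<forall>u\<in>V. e2 \<bullet> u = 0" "p2 = g + v2 + e2"
    "a2 \<bullet> e2 = 0" "a1 \<bullet> e2 < 0"
    using edge_vec[OF cA intA sub f2 f1 ne[symmetric] G2 G1 a2 a1 gG] unfolding V_def by metis
  define U where "U = {v. \<forall>u\<in>V. v \<bullet> u = 0}"
  have sU: "subspace U" unfolding U_def subspace_def by (auto simp: inner_add_left)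
  have dimA: "aff_dim A = int DIM('a)" using intA aff_dim_nonempty_interior by blast
  have "aff_dim G = int (dim V)" unfolding V_def using dim_diff_set[OF gG] .
  then have dV: "int (dim V) = int DIM('a) - 2" using sub dimA by (simp add: subfacet_of_def)
  have dU: "dim U = 2" using dim_perp[OF sV] dV unfolding U_def by linarith
  have e1ne: "e1 \<noteq> 0" using pe1(6) by auto
  have e2sp: "e2 \<notin> span {e1}"
  proof
    assume "e2 \<in> span {e1}"
    then obtain c where "e2 = c *\<^sub>R e1" by (auto simp: span_singleton)
    then show False using pe1(5) pe2(6) by simp
  qed
  have e12: "e1 \<noteq> e2" using pe1(5) pe2(6) by auto
  have ind: "independent {e2, e1}"
    using e2sp e1ne by (intro independent_insertI) (auto simp: independent_insert independent_empty)
  have "U \<subseteq> span {e2, e1}"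
  proof -
    have "{e2, e1} \<subseteq> U" using pe1(3) pe2(3) unfolding U_def by blast
    moreover have "card {e2, e1} = dim U" using dU e12 by simp
    ultimately show ?thesis using card_eq_dim[of "{e2, e1}" U] ind by simp
  qed
  moreover have "w \<in> U" using w(1) unfolding U_def V_def by blast
  ultimately have "w \<in> span {e2, e1}" by blast
  then obtain \<alpha> \<beta> where wab: "w = \<alpha> *\<^sub>R e1 + \<beta> *\<^sub>R e2"
    by (auto simp: span_insert span_singleton) (metis add.commute diff_add_cancel)
  have "a1 \<bullet> w = \<beta> * (a1 \<bullet> e2)" using wab pe1(5) by (simp add: inner_add_right)
  then have b0: "\<beta> \<ge> 0" using w(2) pe2(6) by (simp add: mult_le_0_iff)
  have "a2 \<bullet> w = \<alpha> * (a2 \<bullet> e1)" using wab pe2(5) by (simp add: inner_add_right)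
  then have a0: "\<alpha> \<ge> 0" using w(3) pe1(6) by (simp add: mult_le_0_iff)
  obtain \<epsilon> where eps: "\<epsilon> > 0" "ball g \<epsilon> \<inter> affine hull G \<subseteq> G"
    using g mem_rel_interior_ball by blast
  define s where "s = \<alpha> + \<beta>"
  define D where "D = \<alpha> * norm v1 + \<beta> * norm v2"
  have s0: "s \<ge> 0" "D \<ge> 0" using a0 b0 unfolding s_def D_def by auto
  define \<delta> where "\<delta> = min (1 / (2 * (s + 1))) (\<epsilon> / (4 * (D + 1)))"
  have d0: "\<delta> > 0" unfolding \<delta>_def using s0 eps by auto
  have ds: "\<delta> * s \<le> 1/2"
  proof -
    have "\<delta> * s \<le> (1 / (2 * (s + 1))) * s" unfolding \<delta>_def using s0 by (intro mult_right_mono) auto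
    also have "\<dots> \<le> 1/2" using s0 by (simp add: field_simps)
    finally show ?thesis .
  qed
  have dD: "\<delta> * D < \<epsilon> / 4"
  proof -
    have "\<delta> * D \<le> (\<epsilon> / (4 * (D + 1))) * D" unfolding \<delta>_def using s0 by (intro mult_right_mono) auto
    also have "\<dots> < \<epsilon> / 4" using s0 eps by (simp add: field_simps)
    finally show ?thesis .
  qed
  define r where "r = 1 - \<delta> * s"
  have r: "r \<ge> 1/2" unfolding r_def using ds by simp
  define y where "y = (\<delta> * \<alpha>) *\<^sub>R v1 + (\<delta> * \<beta>) *\<^sub>R v2"
  define q where "q = g - (1 / r) *\<^sub>R y"
  have yV: "y \<in> V" unfolding y_def using pe1(2) pe2(2) sV
    by (intro subspace_add subspace_mul) auto
  have "- ((1 / r) *\<^sub>R y) \<in> V" using yV sV by (intro subspace_neg subspace_mul) auto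
  then have qaff: "q \<in> affine hull G" unfolding q_def using aff_hull_V[OF gG] V_def by (metis diff_conv_add_uminus)
  have "norm y \<le> \<delta> * D"
  proof -
    have "norm y \<le> norm ((\<delta> * \<alpha>) *\<^sub>R v1) + norm ((\<delta> * \<beta>) *\<^sub>R v2)" unfolding y_def by (rule norm_triangle_ineq)
    also have "\<dots> = \<delta> * D" unfolding D_def using d0 a0 b0 by (simp add: algebra_simps)
    finally show ?thesis .
  qed
  moreover have "norm ((1 / r) *\<^sub>R y) \<le> 2 * norm y"
  proof -
    have "norm ((1 / r) *\<^sub>R y) = norm y / r" using r by simp
    also have "\<dots> \<le> norm y / (1/2)" using r by (intro divide_left_mono) auto
    finally show ?thesis by simp
  qed
  ultimately have "norm ((1 / r) *\<^sub>R y) \<le> 2 * (\<delta> * D)" by linarith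
  moreover have "0 \<le> \<delta> * D" using d0 s0 by simp
  ultimately have "norm ((1 / r) *\<^sub>R y) < \<epsilon>" using dD by linarith
  then have "dist g q < \<epsilon>" unfolding q_def dist_norm by simp
  then have qG: "q \<in> G" using eps qaff by auto
  then have qA: "q \<in> A" using GA by blast
  have eq: "g + \<delta> *\<^sub>R w = r *\<^sub>R q + (\<delta> * \<alpha>) *\<^sub>R p1 + (\<delta> * \<beta>) *\<^sub>R p2"
  proof -
    have "r *\<^sub>R q = r *\<^sub>R g - y" unfolding q_def using r by (simp add: algebra_simps)
    then show ?thesis unfolding pe1(4) pe2(4) wab y_def r_def s_def by (simp add: algebra_simps)
  qed
  show ?thesis
  proof (cases "s = 0")
    case True
    then have "\<alpha> = 0" "\<beta> = 0" using a0 b0 s_def by auto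
    then have "g + 1 *\<^sub>R w \<in> A" using wab gG GA by auto
    then show ?thesis by (intro exI[of _ 1]) auto
  next
    case False
    then have sp: "s > 0" using s0 by simp
    define m where "m = (\<alpha> / s) *\<^sub>R p1 + (\<beta> / s) *\<^sub>R p2"
    have s1: "\<alpha> / s + \<beta> / s = 1" using sp unfolding s_def by (simp add: add_divide_distrib[symmetric])
    have mA: "m \<in> A" unfolding m_def using cA pe1(1) pe2(1) a0 b0 sp s1
      by (intro convexD) auto
    have "r *\<^sub>R q + (\<delta> * s) *\<^sub>R m \<in> A" using cA qA mA r d0 s0 unfolding r_def
      by (intro convexD) auto
    moreover have "r *\<^sub>R q + (\<delta> * s) *\<^sub>R m = g + \<delta> *\<^sub>R w"
      unfolding eq m_def using sp by (simp add: algebra_simps)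
    ultimately show ?thesis using d0 by auto
  qed
qed



lemma relfront_null:
  fixes G :: "'a::euclidean_space set"
  assumes pG: "polytope G" and ne: "G \<noteq> {}" and dG: "aff_dim G = int DIM('a) - 2"
  shows "negligible (msum (rel_frontier G) (orth_disc G 1))"
proof -
  define V where "V = span (diff_set G)"
  have sV: "subspace V" unfolding V_def by simp
  define U where "U = {v. \<forall>u\<in>V. v \<bullet> u = 0}"
  have sU: "subspace U" unfolding U_def subspace_def by (auto simp: inner_add_left)
  obtain g where gG: "g \<in> G" using ne by blast
  have "aff_dim G = int (dim V)" unfolding V_def using dim_diff_set[OF gG] .
  then have dV: "int (dim V) = int DIM('a) - 2" using dG by simp
  have dU: "dim U = 2" using dim_perp[OF sV] dV unfolding U_def by linarith
  have DU: "orth_disc G 1 \<subseteq> U" unfolding U_def V_def orth_disc_def orthogonal_def by blast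
  have rf: "rel_frontier G = \<Union>{F. F facet_of G}"
    using pG by (simp add: rel_frontier_of_polyhedron polytope_imp_polyhedron)
  have fin: "finite {F. F facet_of G}"
    using finite_polytope_faces[OF pG] by (rule finite_subset[rotated]) (auto simp: facet_of_def)
  have eq: "msum (rel_frontier G) (orth_disc G 1) = \<Union>((\<lambda>F. msum F (orth_disc G 1)) ` {F. F facet_of G})"
    unfolding rf msum_def by blast
  have negF: "negligible (msum F (orth_disc G 1))" if F: "F facet_of G" for F
  proof -
    have Fne: "F \<noteq> {}" and aF: "aff_dim F = aff_dim G - 1" using F by (auto simp: facet_of_def)
    obtain f where fF: "f \<in> F" using Fne by blast
    define X where "X = span ((\<lambda>x. x - f) ` F)"
    have sX: "subspace X" unfolding X_def by simp
    have "aff_dim F = int (dim ((\<lambda>x. x - f) ` F))"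
      using fF by (intro aff_dim_eq_dim_subtract) (simp add: hull_inc)
    then have dX: "int (dim X) = int DIM('a) - 3" unfolding X_def using aF dG by simp
    define S where "S = {x + y |x y. x \<in> X \<and> y \<in> U}"
    have "dim S + dim (X \<inter> U) = dim X + dim U" unfolding S_def by (rule dim_sums_Int[OF sX sU])
    then have "dim S < DIM('a)" using dX dU by linarith
    then have "negligible S" by (rule negligible_lowdim)
    then have "negligible ((+) f ` S)" by (rule negligible_translation)
    moreover have "msum F (orth_disc G 1) \<subseteq> (+) f ` S"
    proof
      fix z assume "z \<in> msum F (orth_disc G 1)"
      then obtain a d where z: "z = a + d" "a \<in> F" "d \<in> orth_disc G 1" unfolding msum_def by blast
      have "a - f \<in> X" unfolding X_def using z(2) by (intro span_base) auto
      moreover have "d \<in> U" using z(3) DU by blast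
      ultimately have "(a - f) + d \<in> S" unfolding S_def by blast
      moreover have "z = f + ((a - f) + d)" using z by simp
      ultimately show "z \<in> (+) f ` S" by blast
    qed
    ultimately show ?thesis by (rule negligible_subset)
  qed
  show ?thesis unfolding eq using fin negF by (intro negligible_Union) auto
qed



lemma affine_emeasure_scale:
  fixes L :: "'a::euclidean_space \<Rightarrow> 'a"
  assumes "linear L" "inj L"
  obtains k where "\<And>S. S \<in> sets borel \<Longrightarrow> emeasure lborel ((\<lambda>x. c + L (x - c)) ` S) = k * emeasure lborel S"
proof -
  obtain k where k: "\<And>S. S \<in> sets borel \<Longrightarrow> emeasure lborel (L ` S) = k * emeasure lborel S"
    using linear_emeasure_scale[OF assms] by metis
  obtain h where hl: "linear h" and hL: "\<And>x. h (L x) = x" and Lh: "\<And>x. L (h x) = x"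
    using assms linear_injective_isomorphism by metis
  have hm[measurable]: "h \<in> borel_measurable borel"
    using hl by (simp add: borel_measurable_continuous_onI linear_continuous_on linear_linear)
  show ?thesis
  proof (rule that)
    fix S :: "'a set" assume S[measurable]: "S \<in> sets borel"
    define S' where "S' = {z. c + z \<in> S}"
    have S'b: "S' \<in> sets borel" unfolding S'_def by measurable
    have LS: "L ` S' = h -` S'" using hL Lh by (auto simp: image_def) (metis)
    have LSb: "L ` S' \<in> sets borel" unfolding LS using measurable_sets[OF hm S'b] by simp
    have "(\<lambda>x. c + L (x - c)) ` S = {y. - c + y \<in> L ` S'}"
    proof (intro set_eqI iffI)
      fix y assume "y \<in> (\<lambda>x. c + L (x - c)) ` S"
      then obtain x where "x \<in> S" "y = c + L (x - c)" by blast
      then show "y \<in> {y. - c + y \<in> L ` S'}" unfolding S'_def by (auto intro!: image_eqI[of _ _ "x - c"])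
    next
      fix y assume "y \<in> {y. - c + y \<in> L ` S'}"
      then obtain z where "z \<in> S'" "- c + y = L z" by auto
      then show "y \<in> (\<lambda>x. c + L (x - c)) ` S" unfolding S'_def
        by (auto intro!: image_eqI[of _ _ "c + z"]) (metis add.commute add_diff_cancel_left' diff_add_cancel minus_add_cancel)
    qed
    then have "emeasure lborel ((\<lambda>x. c + L (x - c)) ` S) = emeasure lborel (L ` S')"
      using emeasure_lborel_shift[OF LSb, of "-c"] by simp
    also have "\<dots> = k * emeasure lborel S'" using k[OF S'b] .
    also have "emeasure lborel S' = emeasure lborel S" unfolding S'_def by (rule emeasure_lborel_shift[OF S])
    finally show "emeasure lborel ((\<lambda>x. c + L (x - c)) ` S) = k * emeasure lborel S" .
  qed
qed



lemma convex_ray: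
  fixes A :: "'a::euclidean_space set"
  assumes "convex A" "g \<in> A" "g + d *\<^sub>R w \<in> A" "0 \<le> d'" "d' \<le> d"
  shows "g + d' *\<^sub>R w \<in> A"
proof (cases "d = 0")
  case True then show ?thesis using assms by simp
next
  case False
  then have d: "d > 0" using assms by simp
  have "(1 - d'/d) *\<^sub>R g + (d'/d) *\<^sub>R (g + d *\<^sub>R w) \<in> A"
    using assms d by (intro convexD) (auto simp: field_simps)
  moreover have "(1 - d'/d) *\<^sub>R g + (d'/d) *\<^sub>R (g + d *\<^sub>R w) = g + d' *\<^sub>R w"
    using d by (simp add: algebra_simps)
  ultimately show ?thesis by simp
qed

theorem lemma5p9:
  fixes A G F1 F2 H1 H2 :: "'a::euclidean_space set" and \<mu> :: "'a measure"
  assumes "polytope A" and "interior A \<noteq> {}"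
    and "subfacet_of G A"
    and "F1 facet_of A" and "F2 facet_of A" and "F1 \<noteq> F2"
    and "G \<subseteq> F1" and "G \<subseteq> F2"
    and "support_halfspace_at A F1 H1" and "support_halfspace_at A F2 H2"
    and "finite_measure \<mu>" and "sets \<mu> = sets borel"
    and "emeasure \<mu> (UNIV - diff_set G) = 0"
    and "flat_null G {x \<in> G. conv_ind G \<mu> x < 1}"
    and "\<eta> > 0"
  shows "(\<lambda>\<delta>. measure lebesgue {x \<in> msum G (orth_disc G \<delta>) \<inter> H1 \<inter> H2. conv_ind A \<mu> x < 1 - \<eta>})
           \<in> o[at_right 0](\<lambda>\<delta>. measure lebesgue (msum G (orth_disc G \<delta>) \<inter> H1 \<inter> H2))"
proof -
  note polyA = assms(1) and intA = assms(2) and sub = assms(3) and f1 = assms(4) and f2 = assms(5)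
    and ne12 = assms(6) and G1 = assms(7) and G2 = assms(8) and eta = assms(15)
  obtain a1 b1 where a1: "a1 \<noteq> 0" "H1 = {x. a1 \<bullet> x \<le> b1}" "A \<subseteq> H1" "F1 \<subseteq> {x. a1 \<bullet> x = b1}"
    using assms(9) unfolding support_halfspace_at_def by blast
  obtain a2 b2 where a2: "a2 \<noteq> 0" "H2 = {x. a2 \<bullet> x \<le> b2}" "A \<subseteq> H2" "F2 \<subseteq> {x. a2 \<bullet> x = b2}"
    using assms(10) unfolding support_halfspace_at_def by blast
  have cA: "convex A" using polyA polytope_imp_convex by blast
  have clA: "closed A" using polyA polytope_imp_closed by blast
  have Gf: "G face_of A" "G \<noteq> {}" using sub by (auto simp: subfacet_of_def)
  have pG: "polytope G" using face_of_polytope_polytope[OF polyA Gf(1)] .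
  have cG: "compact G" using pG polytope_imp_compact by blast
  have GA: "G \<subseteq> A" using Gf face_of_imp_subset by blast
  have dimA: "aff_dim A = int DIM('a)" using intA aff_dim_nonempty_interior by blast
  have dG: "aff_dim G = int DIM('a) - 2" using sub dimA by (simp add: subfacet_of_def)
  obtain g0 where g0: "g0 \<in> G" using Gf by blast
  define V where "V = span (diff_set G)"
  have sV: "subspace V" unfolding V_def by simp
  obtain P where P: "linear P" "\<And>x. P x \<in> V" "\<And>x u. u \<in> V \<Longrightarrow> (x - P x) \<bullet> u = 0"
    "\<And>v. v \<in> V \<Longrightarrow> P v = v" "\<And>v. (\<forall>u\<in>V. v \<bullet> u = 0) \<Longrightarrow> P v = 0"
    using proj_exists[OF sV] by metis
  have a1G: "\<And>x. x \<in> G \<Longrightarrow> a1 \<bullet> x = b1" using G1 a1(4) by blast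
  have a2G: "\<And>x. x \<in> G \<Longrightarrow> a2 \<bullet> x = b2" using G2 a2(4) by blast
  have dV: "\<And>g g'. g \<in> G \<Longrightarrow> g' \<in> G \<Longrightarrow> g - g' \<in> V"
    unfolding V_def diff_set_def by (intro span_base) blast
  define Lm where "Lm \<delta> x = P x + \<delta> *\<^sub>R (x - P x)" for \<delta> :: real and x :: 'a
  define T where "T \<delta> x = g0 + Lm \<delta> (x - g0)" for \<delta> :: real and x :: 'a
  have linL: "linear (Lm \<delta>)" for \<delta>
    unfolding Lm_def using P(1)
    by (intro linearI) (simp_all add: linear_add linear_scale algebra_simps)
  have PP: "P (P x) = P x" for x using P(2,4) by blast
  have Pd: "P (x - P x) = 0" for x using P(1) PP by (simp add: linear_diff)
  have LmV: "t \<in> V \<Longrightarrow> Lm \<delta> t = t" for t \<delta> unfolding Lm_def using P(4) by simp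
  have Lmp: "(\<forall>u\<in>V. v \<bullet> u = 0) \<Longrightarrow> Lm \<delta> v = \<delta> *\<^sub>R v" for v \<delta> unfolding Lm_def using P(5) by simp
  have Tg: "g \<in> G \<Longrightarrow> (\<forall>u\<in>V. v \<bullet> u = 0) \<Longrightarrow> T \<delta> (g + v) = g + \<delta> *\<^sub>R v" for g v \<delta>
  proof -
    assume g: "g \<in> G" and v: "\<forall>u\<in>V. v \<bullet> u = 0"
    have "T \<delta> (g + v) = g0 + (Lm \<delta> (g - g0) + Lm \<delta> v)"
      unfolding T_def using linL[of \<delta>] by (simp add: linear_add[symmetric] algebra_simps)
    also have "\<dots> = g + \<delta> *\<^sub>R v" using LmV[OF dV[OF g g0]] Lmp[OF v] by simp
    finally show ?thesis .
  qed
  have Tsub: "t \<in> V \<Longrightarrow> T \<delta> (x - t) = T \<delta> x - t" for t x \<delta>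
  proof -
    assume t: "t \<in> V"
    have "Lm \<delta> (x - t - g0) = Lm \<delta> (x - g0) - Lm \<delta> t"
      using linL[of \<delta>] by (simp add: linear_diff[symmetric] algebra_simps)
    then show ?thesis unfolding T_def using LmV[OF t] by simp
  qed
  have LL: "Lm \<delta> (Lm \<delta>' y) = Lm (\<delta> * \<delta>') y" for \<delta> \<delta>' y
  proof -
    have "P (Lm \<delta>' y) = P y" unfolding Lm_def using P(1) PP Pd by (simp add: linear_add linear_scale)
    then show ?thesis unfolding Lm_def by (simp add: algebra_simps)
  qed
  have Lm1: "Lm 1 y = y" for y unfolding Lm_def by simp
  have TT: "\<delta> \<noteq> 0 \<Longrightarrow> T \<delta> (T (1/\<delta>) x) = x" "\<delta> \<noteq> 0 \<Longrightarrow> T (1/\<delta>) (T \<delta> x) = x" for \<delta> x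
    unfolding T_def by (simp_all add: LL Lm1)
  have injL: "\<delta> \<noteq> 0 \<Longrightarrow> inj (Lm \<delta>)" for \<delta>
    by (metis LL Lm1 injI nonzero_divide_eq_eq times_divide_eq_right)
  have contT: "continuous_on UNIV (T \<delta>)" for \<delta>
  proof -
    have "continuous_on UNIV (Lm \<delta>)" using linL linear_continuous_on linear_linear by blast
    then have "continuous_on UNIV (\<lambda>x. Lm \<delta> (x - g0))"
      by (rule continuous_on_compose2) (auto intro: continuous_intros)
    then show ?thesis unfolding T_def by (intro continuous_intros)
  qed
  have Tm[measurable]: "T \<delta> \<in> borel_measurable borel" for \<delta>
    using contT by (rule borel_measurable_continuous_onI)
  have Timg: "\<delta> \<noteq> 0 \<Longrightarrow> T \<delta> ` S = T (1/\<delta>) -` S" for \<delta> S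
    using TT by (auto simp: image_def) (metis)
  have od: "orth_disc G r = {v. norm v \<le> r \<and> (\<forall>u\<in>V. v \<bullet> u = 0)}" for r
    by (auto simp: orth_disc_def V_def orthogonal_def)
  define W where "W r = {v. norm v \<le> r \<and> (\<forall>u\<in>V. v \<bullet> u = 0) \<and> a1 \<bullet> v \<le> 0 \<and> a2 \<bullet> v \<le> 0}" for r
  define Q where "Q r = msum G (orth_disc G r) \<inter> H1 \<inter> H2" for r
  have Qeq: "Q r = msum G (W r)" for r
  proof (intro set_eqI iffI)
    fix x assume "x \<in> Q r"
    then obtain g v where x: "x = g + v" "g \<in> G" "v \<in> orth_disc G r" "x \<in> H1" "x \<in> H2"
      unfolding Q_def msum_def by blast
    have "a1 \<bullet> v \<le> 0" using x a1(2) a1G[OF x(2)] by (simp add: inner_add_right)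
    moreover have "a2 \<bullet> v \<le> 0" using x a2(2) a2G[OF x(2)] by (simp add: inner_add_right)
    ultimately show "x \<in> msum G (W r)" using x unfolding msum_def W_def od by blast
  next
    fix x assume "x \<in> msum G (W r)"
    then obtain g v where x: "x = g + v" "g \<in> G" "v \<in> W r" unfolding msum_def by blast
    then have "x \<in> H1" "x \<in> H2" using a1(2) a2(2) a1G a2G unfolding W_def by (auto simp: inner_add_right)
    then show "x \<in> Q r" using x unfolding Q_def msum_def W_def od by blast
  qed
  have TQ: "\<delta> > 0 \<Longrightarrow> T \<delta> ` Q 1 = Q \<delta>" for \<delta>
  proof (intro set_eqI iffI)
    fix y assume d: "\<delta> > 0" and "y \<in> T \<delta> ` Q 1"
    then obtain g v where y: "y = T \<delta> (g + v)" "g \<in> G" "v \<in> W 1" unfolding Qeq msum_def by blast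
    have v': "\<delta> *\<^sub>R v \<in> W \<delta>" using d y(3) unfolding W_def by (auto simp: inner_scaleR_right mult_le_0_iff)
    have "y = g + \<delta> *\<^sub>R v" using y Tg W_def by auto
    then show "y \<in> Q \<delta>" unfolding Qeq msum_def using y(2) v' by blast
  next
    fix y assume d: "\<delta> > 0" and "y \<in> Q \<delta>"
    then obtain g v where y: "y = g + v" "g \<in> G" "v \<in> W \<delta>" unfolding Qeq msum_def by blast
    then have v1: "(1/\<delta>) *\<^sub>R v \<in> W 1" using d unfolding W_def
      by (auto simp: inner_scaleR_right mult_le_0_iff field_simps)
    then have "T \<delta> (g + (1/\<delta>) *\<^sub>R v) = y" using Tg[OF y(2)] y d unfolding W_def by auto
    moreover have "g + (1/\<delta>) *\<^sub>R v \<in> Q 1" unfolding Qeq msum_def using y(2) v1 by blast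
    ultimately show "y \<in> T \<delta> ` Q 1" by blast
  qed
  have cW: "compact (W r)" for r
  proof -
    have "W r = cball 0 r \<inter> (\<Inter>u\<in>V. {v. u \<bullet> v = 0}) \<inter> {v. a1 \<bullet> v \<le> 0} \<inter> {v. a2 \<bullet> v \<le> 0}"
      unfolding W_def by (auto simp: inner_commute)
    moreover have "closed (cball (0::'a) r \<inter> (\<Inter>u\<in>V. {v. u \<bullet> v = 0}) \<inter> {v. a1 \<bullet> v \<le> 0} \<inter> {v. a2 \<bullet> v \<le> 0})"
      by (intro closed_Int closed_INT ballI closed_hyperplane closed_halfspace_le closed_cball)
    ultimately show ?thesis by (simp add: compact_eq_bounded_closed bounded_Int)
  qed
  have cQ: "compact (Q r)" for r unfolding Qeq msum_def by (intro compact_sums cG cW)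
  have Qb[measurable]: "Q r \<in> sets borel" for r using cQ by (simp add: borel_compact)
  have scale: "\<exists>k. \<forall>S\<in>sets borel. emeasure lborel (T \<delta> ` S) = k * emeasure lborel S" if d: "\<delta> > 0" for \<delta>
  proof -
    obtain k where "\<And>S. S \<in> sets borel \<Longrightarrow> emeasure lborel ((\<lambda>x. g0 + Lm \<delta> (x - g0)) ` S) = k * emeasure lborel S"
      using affine_emeasure_scale[OF linL injL] d by (metis less_irrefl)
    then show ?thesis unfolding T_def by blast
  qed
  interpret mu: finite_measure \<mu> by (rule assms(11))
  have smu: "sets \<mu> = sets borel" by (rule assms(12))
  have spmu: "space \<mu> = UNIV" using sets_eq_imp_space_eq[OF smu] by simp
  have pre: "{t. c - t \<in> S} \<in> sets \<mu>" if S: "S \<in> sets borel" for c S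
  proof -
    have "(\<lambda>t. c - t) \<in> borel_measurable borel" by measurable
    from measurable_sets[OF this S] show ?thesis unfolding smu by (simp add: vimage_def)
  qed
  have memu: "(\<lambda>x. emeasure \<mu> {t. x - t \<in> S}) \<in> borel_measurable borel" if S: "S \<in> sets borel" for S
  proof -
    have "{p. fst p - snd p \<in> S} \<in> sets (borel :: ('a \<times> 'a) measure)"
    proof -
      have "continuous_on UNIV (\<lambda>p::'a\<times>'a. fst p - snd p)" by (intro continuous_intros)
      then have "(\<lambda>p::'a\<times>'a. fst p - snd p) \<in> borel_measurable borel" by (rule borel_measurable_continuous_onI)
      from measurable_sets[OF this S] show ?thesis by (simp add: vimage_def)
    qed
    moreover have "sets (lborel \<Otimes>\<^sub>M \<mu>) = sets (borel :: ('a \<times> 'a) measure)"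
    proof -
      have "sets (lborel \<Otimes>\<^sub>M \<mu>) = sets (borel \<Otimes>\<^sub>M (borel :: 'a measure))"
        by (rule sets_pair_measure_cong) (simp_all add: smu)
      then show ?thesis by (simp only: borel_prod)
    qed
    ultimately have "{p. fst p - snd p \<in> S} \<in> sets (lborel \<Otimes>\<^sub>M \<mu>)" by simp
    from mu.measurable_emeasure_Pair[OF this] show ?thesis by (simp add: vimage_def)
  qed
  have mmu: "(\<lambda>x. measure \<mu> {t. x - t \<in> S}) \<in> borel_measurable borel" if S: "S \<in> sets borel" for S
    using memu[OF S] unfolding measure_def by measurable
  define N0 where "N0 = msum {x \<in> G. conv_ind G \<mu> x < 1} (orth_disc G 1)"
  have "N0 \<in> null_sets lebesgue" using assms(14) unfolding flat_null_def N0_def by (rule conjunct2)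
  then have "\<exists>N'\<in>null_sets lborel. N0 \<subseteq> N'" by (simp only: null_sets_completion_iff2)
  then obtain N' where N': "N' \<in> null_sets lborel" "N0 \<subseteq> N'" by blast
  have N'b[measurable]: "N' \<in> sets borel" using N' by (simp add: null_sets_def)
  define R where "R \<delta> = {z \<in> Q 1. T \<delta> z \<in> A}" for \<delta>
  have Rb[measurable]: "R \<delta> \<in> sets borel" for \<delta>
  proof -
    have "closed (T \<delta> -` A)" using contT clA
      by (simp add: continuous_on_closed_vimage)
    then have "closed (R \<delta>)" unfolding R_def using cQ[of 1]
      by (simp add: compact_imp_closed closed_Int Collect_conj_eq vimage_def)
    then show ?thesis by (simp add: borel_closed)
  qed
  have Rray: "T \<delta> z \<in> A \<Longrightarrow> 0 < \<delta>' \<Longrightarrow> \<delta>' \<le> \<delta> \<Longrightarrow> z \<in> Q 1 \<Longrightarrow> T \<delta>' z \<in> A" for z \<delta> \<delta>'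
  proof -
    assume A1: "T \<delta> z \<in> A" and d: "0 < \<delta>'" "\<delta>' \<le> \<delta>" and z: "z \<in> Q 1"
    then obtain g w where gw: "z = g + w" "g \<in> G" "w \<in> W 1" unfolding Qeq msum_def by blast
    have wp: "\<forall>u\<in>V. w \<bullet> u = 0" using gw unfolding W_def by blast
    have "g + \<delta> *\<^sub>R w \<in> A" using A1 Tg[OF gw(2) wp] gw by simp
    then have "g + \<delta>' *\<^sub>R w \<in> A" using convex_ray[OF cA] GA gw d by auto
    then show ?thesis using Tg[OF gw(2) wp] gw by simp
  qed
  have Rmono: "0 < \<delta>' \<Longrightarrow> \<delta>' \<le> \<delta> \<Longrightarrow> R \<delta> \<subseteq> R \<delta>'" for \<delta> \<delta>'
    unfolding R_def using Rray by blast
  define Z where "Z = msum (rel_frontier G) (W 1)"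
  have cZ: "compact Z" unfolding Z_def msum_def
    using cG by (intro compact_sums compact_rel_frontier cW)
  have Zb[measurable]: "Z \<in> sets borel" using cZ by (simp add: borel_compact)
  have Znull: "Z \<in> null_sets lborel"
  proof -
    have "Z \<subseteq> msum (rel_frontier G) (orth_disc G 1)" unfolding Z_def msum_def W_def od by blast
    then have "negligible Z" using relfront_null[OF pG Gf(2) dG] negligible_subset by blast
    then have "Z \<in> null_sets lebesgue" by (simp add: negligible_iff_null_sets)
    then show ?thesis using null_sets_completion_iff[OF Zb[simplified sets_lborel[symmetric]]] by simp
  qed
  have Rlim: "\<exists>\<delta>>0. \<forall>\<delta>'. 0 < \<delta>' \<and> \<delta>' \<le> \<delta> \<longrightarrow> z \<in> R \<delta>'" if z: "z \<in> Q 1" "z \<notin> Z" for z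
  proof -
    obtain g w where gw: "z = g + w" "g \<in> G" "w \<in> W 1" using z unfolding Qeq msum_def by blast
    have "g \<notin> rel_frontier G" using z gw unfolding Z_def msum_def by blast
    then have gri: "g \<in> rel_interior G" using gw(2) cG
      by (simp add: rel_frontier_def compact_imp_closed closure_closed)
    have wp: "\<forall>u\<in>span (diff_set G). w \<bullet> u = 0" "a1 \<bullet> w \<le> 0" "a2 \<bullet> w \<le> 0"
      using gw(3) unfolding W_def V_def by auto
    have a1': "A \<subseteq> {x. a1 \<bullet> x \<le> b1}" and a2': "A \<subseteq> {x. a2 \<bullet> x \<le> b2}" using a1 a2 by auto
    obtain \<delta> where d: "\<delta> > 0" "g + \<delta> *\<^sub>R w \<in> A"
      using geom_key[OF cA intA sub f1 f2 ne12 G1 G2 a1(1) a1' a1(4) a2(1) a2' a2(4) gri wp] by blast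
    have wp': "\<forall>u\<in>V. w \<bullet> u = 0" using wp V_def by simp
    have "T \<delta> z \<in> A" using d Tg[OF gw(2) wp'] gw by simp
    then show ?thesis using d(1) Rray z(1) unfolding R_def by blast
  qed
  have Q1Rb[measurable]: "Q 1 - R \<delta> \<in> sets borel" for \<delta> by measurable
  define Bad where "Bad \<delta> = {x \<in> Q 1. \<eta> < measure \<mu> {t. x - t \<in> Q 1 - R \<delta>}}" for \<delta>
  define E where "E \<delta> = (N' \<inter> Q 1) \<union> Bad \<delta>" for \<delta>
  have Eb[measurable]: "E \<delta> \<in> sets borel" for \<delta>
  proof -
    have [measurable]: "(\<lambda>x. measure \<mu> {t. x - t \<in> Q 1 - R \<delta>}) \<in> borel_measurable borel"
      by (rule mmu) measurable
    have "Bad \<delta> \<in> sets borel" unfolding Bad_def by measurable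
    then show ?thesis unfolding E_def by measurable
  qed
  have EQ: "E \<delta> \<subseteq> Q 1" for \<delta> unfolding E_def Bad_def by blast
  have Emono: "0 < \<delta>' \<Longrightarrow> \<delta>' \<le> \<delta> \<Longrightarrow> E \<delta>' \<subseteq> E \<delta>" for \<delta> \<delta>'
  proof -
    assume d: "0 < \<delta>'" "\<delta>' \<le> \<delta>"
    have "Bad \<delta>' \<subseteq> Bad \<delta>"
    proof
      fix x assume "x \<in> Bad \<delta>'"
      then have x: "x \<in> Q 1" "\<eta> < measure \<mu> {t. x - t \<in> Q 1 - R \<delta>'}" unfolding Bad_def by auto
      have "measure \<mu> {t. x - t \<in> Q 1 - R \<delta>'} \<le> measure \<mu> {t. x - t \<in> Q 1 - R \<delta>}"
        using Rmono[OF d] pre[OF Q1Rb[of \<delta>]] by (intro mu.finite_measure_mono) auto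
      then show "x \<in> Bad \<delta>" using x unfolding Bad_def by auto
    qed
    then show ?thesis unfolding E_def by blast
  qed
  have key: "{x \<in> Q \<delta>. conv_ind A \<mu> x < 1 - \<eta>} \<subseteq> T \<delta> ` E \<delta>" if d: "\<delta> > 0" for \<delta>
  proof
    fix x assume x: "x \<in> {x \<in> Q \<delta>. conv_ind A \<mu> x < 1 - \<eta>}"
    then obtain z where z: "z \<in> Q 1" "x = T \<delta> z" using TQ[OF d] by blast
    have "z \<in> E \<delta>"
    proof (rule ccontr)
      assume zE: "z \<notin> E \<delta>"
      obtain g w where gw: "z = g + w" "g \<in> G" "w \<in> W 1" using z unfolding Qeq msum_def by blast
      have cg: "conv_ind G \<mu> g \<ge> 1"
      proof (rule ccontr)
        assume "\<not> ?thesis"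
        then have "z \<in> N0" unfolding N0_def msum_def using gw unfolding W_def od by force
        then show False using zE N' z unfolding E_def by blast
      qed
      have zB: "measure \<mu> {t. z - t \<in> Q 1 - R \<delta>} \<le> \<eta>" using zE z unfolding E_def Bad_def by auto
      define Sg where "Sg = {t. g - t \<in> G}"
      define X where "X = {t. x - t \<in> A}"
      define Y where "Y = {t. z - t \<in> Q 1 - R \<delta>}"
      have sub: "Sg \<subseteq> X \<union> Y"
      proof
        fix t assume "t \<in> Sg"
        then have gt: "g - t \<in> G" unfolding Sg_def by simp
        have tV: "t \<in> V" using dV[OF gw(2) gt] by simp
        have "z - t = (g - t) + w" using gw by simp
        then have zt: "z - t \<in> Q 1" unfolding Qeq msum_def using gt gw(3) by blast
        have "T \<delta> (z - t) = x - t" using Tsub[OF tV] z by simp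
        then show "t \<in> X \<union> Y" unfolding X_def Y_def R_def using zt by auto
      qed
      have mS: "Sg \<in> sets \<mu>" "X \<in> sets \<mu>" "Y \<in> sets \<mu>" unfolding Sg_def X_def Y_def
        using cG clA pre[OF Q1Rb[of \<delta>]] by (auto intro!: pre simp: borel_compact borel_closed)
      have "conv_ind G \<mu> g = measure \<mu> Sg" unfolding conv_ind_def Sg_def ..
      also have "\<dots> \<le> measure \<mu> (X \<union> Y)" using sub mS by (intro mu.finite_measure_mono) auto
      also have "\<dots> \<le> measure \<mu> X + measure \<mu> Y" using mS by (intro measure_subadditive) (auto simp: mu.emeasure_real)
      also have "measure \<mu> X = conv_ind A \<mu> x" unfolding X_def conv_ind_def ..
      finally show False using cg zB x unfolding Y_def by auto
    qed
    then show "x \<in> T \<delta> ` E \<delta>" using z by blast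
  qed
  define M where "M = {x \<in> Q 1. \<eta> \<le> measure \<mu> {t. x - t \<in> Z}}"
  have Mb[measurable]: "M \<in> sets borel"
  proof -
    have [measurable]: "(\<lambda>x. measure \<mu> {t. x - t \<in> Z}) \<in> borel_measurable borel"
      by (rule mmu) measurable
    show ?thesis unfolding M_def by measurable
  qed
  have Mnull: "emeasure lborel M = 0"
  proof -
    interpret pmu: pair_sigma_finite lborel \<mu>
      by (simp add: pair_sigma_finite_def lborel.sigma_finite_measure_axioms mu.sigma_finite_measure_axioms)
    have sp: "sets (lborel \<Otimes>\<^sub>M \<mu>) = sets (borel :: ('a \<times> 'a) measure)"
    proof -
      have "sets (lborel \<Otimes>\<^sub>M \<mu>) = sets (borel \<Otimes>\<^sub>M (borel :: 'a measure))"
        by (rule sets_pair_measure_cong) (simp_all add: smu)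
      then show ?thesis by (simp only: borel_prod)
    qed
    have mprod: "(\<lambda>(x, t). indicator (Q 1) x * indicator Z (x - t) :: ennreal) \<in> borel_measurable (lborel \<Otimes>\<^sub>M \<mu>)"
    proof -
      have c1: "continuous_on UNIV (\<lambda>p::'a\<times>'a. fst p - snd p)" by (intro continuous_intros)
      have [measurable]: "(\<lambda>p::'a\<times>'a. fst p - snd p) \<in> borel_measurable borel"
        using c1 by (rule borel_measurable_continuous_onI)
      have c2: "continuous_on UNIV (\<lambda>p::'a\<times>'a. fst p)" by (intro continuous_intros)
      have [measurable]: "(\<lambda>p::'a\<times>'a. fst p) \<in> borel_measurable borel"
        using c2 by (rule borel_measurable_continuous_onI)
      have "(\<lambda>p::'a\<times>'a. indicator (Q 1) (fst p) * indicator Z (fst p - snd p) :: ennreal) \<in> borel_measurable borel"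
        by measurable
      moreover have "(\<lambda>(x, t). indicator (Q 1) x * indicator Z (x - t) :: ennreal)
          = (\<lambda>p. indicator (Q 1) (fst p) * indicator Z (fst p - snd p))" by auto
      ultimately show ?thesis unfolding measurable_cong_sets[OF sp refl] by simp
    qed
    have I: "(\<integral>\<^sup>+x. indicator (Q 1) x * emeasure \<mu> {t. x - t \<in> Z} \<partial>lborel) = 0"
    proof -
      have "(\<integral>\<^sup>+x. indicator (Q 1) x * emeasure \<mu> {t. x - t \<in> Z} \<partial>lborel)
          = (\<integral>\<^sup>+x. \<integral>\<^sup>+t. indicator (Q 1) x * indicator Z (x - t) \<partial>\<mu> \<partial>lborel)"
      proof (rule nn_integral_cong)
        fix x
        have mi: "(\<lambda>t. indicator {t. x - t \<in> Z} t :: ennreal) \<in> borel_measurable \<mu>"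
          using pre[OF Zb, of x] by simp
        have "(\<integral>\<^sup>+t. indicator (Q 1) x * indicator Z (x - t) \<partial>\<mu>)
            = (\<integral>\<^sup>+t. indicator (Q 1) x * indicator {t. x - t \<in> Z} t \<partial>\<mu>)"
          by (intro nn_integral_cong) (simp add: indicator_def)
        also have "\<dots> = indicator (Q 1) x * (\<integral>\<^sup>+t. indicator {t. x - t \<in> Z} t \<partial>\<mu>)"
          using mi by (rule nn_integral_cmult)
        also have "\<dots> = indicator (Q 1) x * emeasure \<mu> {t. x - t \<in> Z}"
          using pre[OF Zb, of x] by simp
        finally show "indicator (Q 1) x * emeasure \<mu> {t. x - t \<in> Z}
            = (\<integral>\<^sup>+t. indicator (Q 1) x * indicator Z (x - t) \<partial>\<mu>)" by simp
      qed
      also have "\<dots> = (\<integral>\<^sup>+t. \<integral>\<^sup>+x. indicator (Q 1) x * indicator Z (x - t) \<partial>lborel \<partial>\<mu>)"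
        by (rule pmu.Fubini'[of "\<lambda>x t. indicator (Q 1) x * indicator Z (x - t)", symmetric]) (use mprod in simp)
      also have "\<dots> \<le> (\<integral>\<^sup>+t. \<integral>\<^sup>+x. indicator Z (- t + x) \<partial>lborel \<partial>\<mu>)"
        by (intro nn_integral_mono) (auto simp: indicator_def)
      also have "\<dots> = (\<integral>\<^sup>+t. 0 \<partial>\<mu>)"
      proof (rule nn_integral_cong)
        fix t
        have "(\<integral>\<^sup>+x. indicator Z (- t + x) \<partial>lborel) = (\<integral>\<^sup>+x. indicator Z x \<partial>lborel)"
          by (rule nn_integral_lborel_shift) simp
        also have "\<dots> = 0" using Znull by (simp add: null_sets_def)
        finally show "(\<integral>\<^sup>+x. indicator Z (- t + x) \<partial>lborel) = 0" .
      qed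
      finally show ?thesis by simp
    qed
    have "(\<lambda>x. indicator (Q 1) x * emeasure \<mu> {t. x - t \<in> Z}) \<in> borel_measurable lborel"
      using memu[OF Zb] by simp
    then have "AE x in lborel. indicator (Q 1) x * emeasure \<mu> {t. x - t \<in> Z} = 0"
      using I nn_integral_0_iff_AE by blast
    then obtain Nn where Nn: "{x \<in> space lborel. \<not> indicator (Q 1) x * emeasure \<mu> {t. x - t \<in> Z} = 0} \<subseteq> Nn"
      "emeasure lborel Nn = 0" "Nn \<in> sets lborel"
      by (auto elim: AE_E)
    have "M \<subseteq> Nn"
    proof
      fix x assume x: "x \<in> M"
      then have "0 < measure \<mu> {t. x - t \<in> Z}" using eta unfolding M_def by auto
      then have "emeasure \<mu> {t. x - t \<in> Z} \<noteq> 0" by (auto simp: measure_def)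
      then show "x \<in> Nn" using x Nn(1) unfolding M_def by auto
    qed
    then show ?thesis using Nn by (metis emeasure_eq_0)
  qed
  define Es where "Es n = E (1 / real (Suc n))" for n :: nat
  have Esdec: "decseq Es"
    unfolding decseq_def Es_def by (intro allI impI Emono) (auto simp: frac_le)
  have Einter: "(\<Inter>n. Es n) \<subseteq> N' \<union> M"
  proof
    fix x assume x: "x \<in> (\<Inter>n. Es n)"
    show "x \<in> N' \<union> M"
    proof (cases "x \<in> N'")
      case False
      then have xB: "x \<in> Bad (1 / real (Suc n))" for n using x unfolding Es_def E_def by blast
      then have xQ: "x \<in> Q 1" unfolding Bad_def by blast
      define S where "S n = {t. x - t \<in> Q 1 - R (1 / real (Suc n))}" for n
      have Sm: "range S \<subseteq> sets \<mu>" unfolding S_def using pre[OF Q1Rb] by auto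
      have Sdec: "decseq S" unfolding decseq_def
      proof (intro allI impI subsetI)
        fix m n t assume mn: "m \<le> n" and t: "t \<in> S n"
        have "R (1 / real (Suc m)) \<subseteq> R (1 / real (Suc n))" by (rule Rmono) (use mn in \<open>auto simp: frac_le\<close>)
        then show "t \<in> S m" using t unfolding S_def by auto
      qed
      have lim: "(\<lambda>n. measure \<mu> (S n)) \<longlonglongrightarrow> measure \<mu> (\<Inter>n. S n)"
        by (rule mu.finite_Lim_measure_decseq[OF Sm Sdec])
      have "\<eta> \<le> measure \<mu> (\<Inter>n. S n)"
        by (rule LIMSEQ_le_const[OF lim]) (use xB in \<open>auto simp: Bad_def S_def less_imp_le\<close>)
      also have "\<dots> \<le> measure \<mu> {t. x - t \<in> Z}"
      proof (rule mu.finite_measure_mono)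
        show "{t. x - t \<in> Z} \<in> sets \<mu>" using pre[OF Zb] .
        show "(\<Inter>n. S n) \<subseteq> {t. x - t \<in> Z}"
        proof
          fix t assume t: "t \<in> (\<Inter>n. S n)"
          show "t \<in> {t. x - t \<in> Z}"
          proof (rule ccontr)
            assume nz: "t \<notin> {t. x - t \<in> Z}"
            have xt: "x - t \<in> Q 1" using t unfolding S_def by blast
            obtain \<delta> where d: "\<delta> > 0" "\<forall>\<delta>'. 0 < \<delta>' \<and> \<delta>' \<le> \<delta> \<longrightarrow> x - t \<in> R \<delta>'"
              using Rlim[OF xt] nz by auto
            obtain n where n: "inverse (real (Suc n)) < \<delta>" using reals_Archimedean[OF d(1)] by blast
            then have "x - t \<in> R (1 / real (Suc n))" using d(2) by (simp add: inverse_eq_divide)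
            moreover have "x - t \<notin> R (1 / real (Suc n))" using t unfolding S_def by blast
            ultimately show False by blast
          qed
        qed
      qed
      finally show ?thesis unfolding M_def using xQ by auto
    qed auto
  qed
  have finQ1: "emeasure lborel (Q 1) < \<infinity>" using cQ by (rule emeasure_compact_finite)
  have Etends: "(\<lambda>n. emeasure lborel (Es n)) \<longlonglongrightarrow> 0"
  proof -
    have "(\<lambda>n. emeasure lborel (Es n)) \<longlonglongrightarrow> emeasure lborel (\<Inter>n. Es n)"
    proof (rule Lim_emeasure_decseq)
      show "range Es \<subseteq> sets lborel" unfolding Es_def by auto
      show "decseq Es" by (rule Esdec)
      show "emeasure lborel (Es i) \<noteq> \<infinity>" for i
        using emeasure_mono[OF EQ[of "1 / real (Suc i)"] Qb[of 1, simplified sets_lborel[symmetric]]] finQ1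
        unfolding Es_def by (auto simp: top.not_eq_extremum)
    qed
    moreover have "emeasure lborel (\<Inter>n. Es n) = 0"
    proof (rule emeasure_eq_0[OF _ _ Einter])
      show "N' \<union> M \<in> sets lborel" by simp
      have "N' \<union> M \<in> null_sets lborel" using N' Mnull Mb by (intro null_sets.Un) (auto simp: null_sets_def)
      then show "emeasure lborel (N' \<union> M) = 0" by (simp add: null_sets_def)
    qed
    ultimately show ?thesis by simp
  qed
  show ?thesis
  proof (rule landau_o.smallI)
    fix c :: real assume c: "c > 0"
    define c1 where "c1 = emeasure lborel (Q 1)"
    obtain n where n: "emeasure lborel (Es n) \<le> ennreal c * c1"
    proof (cases "c1 = 0")
      case True
      have "emeasure lborel (Es 0) \<le> c1"
        unfolding c1_def Es_def by (rule emeasure_mono[OF EQ]) simp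
      then have "emeasure lborel (Es 0) \<le> ennreal c * c1" using True by simp
      then show ?thesis by (rule that)
    next
      case False
      then have "0 < ennreal c * c1" using c by (simp add: ennreal_zero_less_mult_iff zero_less_iff_neq_zero)
      then have "eventually (\<lambda>n. emeasure lborel (Es n) < ennreal c * c1) sequentially"
        using order_tendstoD(2)[OF Etends] by blast
      then obtain n where "emeasure lborel (Es n) < ennreal c * c1"
        by (auto simp: eventually_sequentially)
      then show ?thesis using that less_imp_le by blast
    qed
    show "\<forall>\<^sub>F \<delta> in at_right 0. norm (measure lebesgue {x \<in> msum G (orth_disc G \<delta>) \<inter> H1 \<inter> H2. conv_ind A \<mu> x < 1 - \<eta>})
             \<le> c * norm (measure lebesgue (msum G (orth_disc G \<delta>) \<inter> H1 \<inter> H2))"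
      unfolding eventually_at_right_field
    proof (intro exI[of _ "1 / real (Suc n)"] conjI allI impI)
      show "(0::real) < 1 / real (Suc n)" by simp
      fix \<delta> :: real assume d: "0 < \<delta>" "\<delta> < 1 / real (Suc n)"
      obtain k where k: "\<forall>S\<in>sets borel. emeasure lborel (T \<delta> ` S) = k * emeasure lborel S"
        using scale d(1) by blast
      have EE: "E \<delta> \<subseteq> Es n" unfolding Es_def using Emono d by auto
      have TEb: "T \<delta> ` E \<delta> \<in> sets borel"
        using measurable_sets[OF Tm[of "1/\<delta>"] Eb[of \<delta>]] Timg[of \<delta>] d by simp
      have Qd: "Q \<delta> = T \<delta> ` Q 1" using TQ d by simp
      have finQ: "emeasure lborel (Q \<delta>) < \<infinity>" using cQ by (rule emeasure_compact_finite)
      have TEQ: "T \<delta> ` E \<delta> \<subseteq> Q \<delta>" unfolding Qd using EQ by blast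
      have fin2: "emeasure lborel (T \<delta> ` E \<delta>) < \<infinity>"
        using emeasure_mono[OF TEQ, of lborel] Qb[of \<delta>] finQ by auto
      have "emeasure lborel (T \<delta> ` E \<delta>) = k * emeasure lborel (E \<delta>)" using k Eb by blast
      also have "\<dots> \<le> k * (ennreal c * c1)"
        using n emeasure_mono[OF EE, of lborel] by (intro mult_left_mono) (auto simp: Es_def)
      also have "\<dots> = ennreal c * (k * c1)" by (simp add: ac_simps)
      also have "k * c1 = emeasure lborel (Q \<delta>)" unfolding c1_def Qd using k Qb by auto
      finally have ineq: "emeasure lborel (T \<delta> ` E \<delta>) \<le> ennreal c * emeasure lborel (Q \<delta>)" .
      have e1: "emeasure lborel (T \<delta> ` E \<delta>) = ennreal (measure lborel (T \<delta> ` E \<delta>))"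
        using fin2 by (simp add: emeasure_eq_ennreal_measure)
      have e2: "emeasure lborel (Q \<delta>) = ennreal (measure lborel (Q \<delta>))"
        using finQ by (simp add: emeasure_eq_ennreal_measure)
      have "ennreal (measure lborel (T \<delta> ` E \<delta>)) \<le> ennreal (c * measure lborel (Q \<delta>))"
        using ineq c unfolding e1 e2 by (simp add: ennreal_mult)
      then have m2: "measure lborel (T \<delta> ` E \<delta>) \<le> c * measure lborel (Q \<delta>)"
        using c by (subst (asm) ennreal_le_iff) auto
      have m1: "measure lebesgue {x \<in> Q \<delta>. conv_ind A \<mu> x < 1 - \<eta>} \<le> measure lebesgue (T \<delta> ` E \<delta>)"
      proof (cases "{x \<in> Q \<delta>. conv_ind A \<mu> x < 1 - \<eta>} \<in> sets lebesgue")
        case True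
        have "T \<delta> ` E \<delta> \<in> fmeasurable lebesgue"
          using TEb fin2 by (auto simp: fmeasurable_def)
        then show ?thesis using key[OF d(1)] True by (intro measure_mono_fmeasurable) auto
      next
        case False then show ?thesis by (simp add: measure_notin_sets)
      qed
      have "measure lebesgue (T \<delta> ` E \<delta>) = measure lborel (T \<delta> ` E \<delta>)" using TEb by simp
      moreover have "measure lebesgue (Q \<delta>) = measure lborel (Q \<delta>)" using Qb[of \<delta>] by simp
      ultimately have "measure lebesgue {x \<in> Q \<delta>. conv_ind A \<mu> x < 1 - \<eta>} \<le> c * measure lebesgue (Q \<delta>)"
        using m1 m2 by simp
      then show "norm (measure lebesgue {x \<in> msum G (orth_disc G \<delta>) \<inter> H1 \<inter> H2. conv_ind A \<mu> x < 1 - \<eta>})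
             \<le> c * norm (measure lebesgue (msum G (orth_disc G \<delta>) \<inter> H1 \<inter> H2))"
        unfolding Q_def by simp
    qed
  qed
qed

end
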